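(* Let $F$ be a maximally expressive I-GGNN+ of depth $T=1$ (with injective readout). Let $\mathcal G=(A,X)$ and $\hat{\mathcal G}=(\hat A,\hat X)$ be geometric graphs in $\mathbb{R}^d$ whose adjacency matrices are both the complete graph on $n$ nodes, with $X,\hat X\in\mathbb{R}^{n\times d}$ arbitrary. If $F(\mathcal G)=F(\hat{\mathcal G})$, then there exist a permutation $\pi$ of $\{1,\dots,n\}$, $Q\in O(d)$ and $t\in\mathbb{R}^d$ with $\hat x_{\pi(i)}=Qx_i+t$ for all $i$.
   Context: A geometric graph in $\mathbb{R}^d$ is a pair $(A,X)$, $A\in\{0,1\}^{n\times n}$ symmetric zero-diagonal adjacency matrix, $X\in\mathbb{R}^{n\times d}$ with rows $x_1,\dots,x_n$; $\mathcal N_i=\{j:A_{ij}=1\}$. The complete graph has $A_{ij}=1$ for all $i\neq j$. An I-GGNN+ of depth $T$: all nodes start with the same feature $v_i^{(0)}=v^{(0)}$; for $t=0,\dots,T-1$, $v_i^{(t+1)}=f_t(\{\!\{(v_j^{(t)},x_i-x_j):j\in\mathcal N_i\}\!\})$, where $f_t$ is defined on finite multisets and satisfies $f_t(\{\!\{(v_j,z_j)\}\!\})=f_t(\{\!\{(v_j,Qz_j)\}\!\})$ for all $Q\in O(d)$ (the same $Q$ applied to all relative vectors, not to the features); the output is $\mathrm{ReadOut}(\{\!\{v_1^{(T)},\dots,v_n^{(T)}\}\!\})$. It is maximally expressive if $f_t(\{\!\{(v_j,z_j)\}\!\})=f_t(\{\!\{(\hat v_j,\hat z_j)\}\!\})$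 holds iff there is $Q\in O(d)$ with $\{\!\{(v_j,z_j)\}\!\}=\{\!\{(\hat v_j,Q\hat z_j)\}\!\}$, and $\mathrm{ReadOut}$ is injective on finite multisets. *)

theory Defs
  imports "HOL-Analysis.Analysis" "HOL-Library.Multiset"
begin

text \<open>Geometric graphs on n nodes (indexed 0..<n) in R^d, with d = CARD('d).
  Adjacency: a relation A :: nat => nat => bool; positions X :: nat => real^'d.\<close>

definition complete_adj :: "nat \<Rightarrow> nat \<Rightarrow> bool" where
  "complete_adj i j \<longleftrightarrow> i \<noteq> j"

definition nbhd :: "nat \<Rightarrow> (nat \<Rightarrow> nat \<Rightarrow> bool) \<Rightarrow> nat \<Rightarrow> nat set" where
  "nbhd n A i = {j. j < n \<and> A i j}"

definition rot_mset :: "real^'d^'d \<Rightarrow> ('v \<times> (real^'d)) multiset \<Rightarrow> ('v \<times> (real^'d)) multiset" where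
  "rot_mset Q M = image_mset (\<lambda>(v, z). (v, Q *v z)) M"

definition o_invariant :: "(('v \<times> (real^'d)) multiset \<Rightarrow> 'w) \<Rightarrow> bool" where
  "o_invariant f \<longleftrightarrow> (\<forall>M Q. orthogonal_matrix Q \<longrightarrow> f (rot_mset Q M) = f M)"

definition max_expressive_update :: "(('v \<times> (real^'d)) multiset \<Rightarrow> 'w) \<Rightarrow> bool" where
  "max_expressive_update f \<longleftrightarrow>
     (\<forall>M M'. f M = f M' \<longleftrightarrow> (\<exists>Q. orthogonal_matrix Q \<and> M = rot_mset Q M'))"

definition ggnn_layer ::
  "nat \<Rightarrow> (nat \<Rightarrow> nat \<Rightarrow> bool) \<Rightarrow> (nat \<Rightarrow> real^'d) \<Rightarrow> (('v \<times> (real^'d)) multiset \<Rightarrow> 'v)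
   \<Rightarrow> (nat \<Rightarrow> 'v) \<Rightarrow> (nat \<Rightarrow> 'v)" where
  "ggnn_layer n A X f v = (\<lambda>i. f (image_mset (\<lambda>j. (v j, X i - X j)) (mset_set (nbhd n A i))))"

fun ggnn_features ::
  "nat \<Rightarrow> (nat \<Rightarrow> nat \<Rightarrow> bool) \<Rightarrow> (nat \<Rightarrow> real^'d) \<Rightarrow> 'v
   \<Rightarrow> (nat \<Rightarrow> ('v \<times> (real^'d)) multiset \<Rightarrow> 'v) \<Rightarrow> nat \<Rightarrow> (nat \<Rightarrow> 'v)" where
  "ggnn_features n A X v0 fs 0 = (\<lambda>i. v0)"
| "ggnn_features n A X v0 fs (Suc t) = ggnn_layer n A X (fs t) (ggnn_features n A X v0 fs t)"

definition ggnn_output ::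
  "nat \<Rightarrow> (nat \<Rightarrow> nat \<Rightarrow> bool) \<Rightarrow> (nat \<Rightarrow> real^'d) \<Rightarrow> 'v
   \<Rightarrow> (nat \<Rightarrow> ('v \<times> (real^'d)) multiset \<Rightarrow> 'v) \<Rightarrow> ('v multiset \<Rightarrow> 'o) \<Rightarrow> nat \<Rightarrow> 'o" where
  "ggnn_output n A X v0 fs R T = R (image_mset (ggnn_features n A X v0 fs T) (mset_set {..<n}))"

end

theory Submission
  imports Defs "HOL-Combinatorics.Permutations"
begin

lemma perm_from_mset:
  assumes "image_mset g (mset_set {..<n}) = image_mset h (mset_set {..<(n::nat)})"
  shows "\<exists>p. p permutes {..<n} \<and> (\<forall>i<n. h (p i) = g i)"
proof -
  have m: "mset_set {..<n} = mset [0..<n]"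
    by (metis atLeast_upt mset_set_set distinct_upt)
  have "mset (map g [0..<n]) = mset (map h [0..<n])"
    using assms by (simp add: m)
  then obtain p where p: "p permutes {..<length (map h [0..<n])}"
      "permute_list p (map h [0..<n]) = map g [0..<n]"
    by (rule mset_eq_permutation)
  have "\<forall>i<n. h (p i) = g i"
  proof (intro allI impI)
    fix i assume i: "i < n"
    have "permute_list p (map h [0..<n]) ! i = map h [0..<n] ! p i"
      using p(1) i by (intro permute_list_nth) auto
    moreover have "p i < n" using p(1) i permutes_in_image by fastforce
    ultimately show "h (p i) = g i" using p(2) i by simp
  qed
  with p(1) show ?thesis by auto
qed

lemma nbhd_complete: "nbhd n complete_adj i = {..<n} - {i}"
  by (auto simp: nbhd_def complete_adj_def)

theorem mainTheorem6:
  fixes n :: nat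
    and X Xh :: "nat \<Rightarrow> real^'d"
    and v0 :: 'v
    and fs :: "nat \<Rightarrow> ('v \<times> (real^'d)) multiset \<Rightarrow> 'v"
    and R :: "'v multiset \<Rightarrow> 'o"
  assumes inv: "\<forall>t<1. o_invariant (fs t)"
    and maxexp: "\<forall>t<1. max_expressive_update (fs t)"
    and readout: "inj R"
    and eq: "ggnn_output n complete_adj X v0 fs R 1 = ggnn_output n complete_adj Xh v0 fs R 1"
  shows "\<exists>\<pi> Q t. \<pi> permutes {..<n} \<and> orthogonal_matrix Q \<and>
           (\<forall>i<n. Xh (\<pi> i) = Q *v X i + t)"
proof (cases "n = 0")
  case True
  then show ?thesis
    by (intro exI[of _ id] exI[of _ "mat 1"] exI[of _ 0]) (auto simp: permutes_id orthogonal_matrix_id)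
next
  case False
  define F where "F = fs 0"
  define M where "M = (\<lambda>(Y::nat \<Rightarrow> real^'d) i. image_mset (\<lambda>j. (v0, Y i - Y j)) (mset_set ({..<n} - {i})))"
  have me: "max_expressive_update F" using maxexp by (simp add: F_def)
  have "image_mset (\<lambda>i. F (M X i)) (mset_set {..<n}) = image_mset (\<lambda>i. F (M Xh i)) (mset_set {..<n})"
    using eq readout[unfolded inj_def]
    by (simp add: ggnn_output_def ggnn_layer_def nbhd_complete M_def F_def)
  moreover have "F (M X 0) \<in># image_mset (\<lambda>i. F (M X i)) (mset_set {..<n})"
    using False by simp
  ultimately have "F (M X 0) \<in> set_mset (image_mset (\<lambda>i. F (M Xh i)) (mset_set {..<n}))"
    by simp
  then have "F (M X 0) \<in> (\<lambda>i. F (M Xh i)) ` {..<n}"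
    by (simp only: set_image_mset finite_set_mset_mset_set finite_lessThan)
  then obtain k where k: "k < n" "F (M X 0) = F (M Xh k)"
    by auto
  then obtain Q where Q: "orthogonal_matrix Q" "M X 0 = rot_mset Q (M Xh k)"
    using me unfolding max_expressive_update_def by blast
  have s: "image_mset snd (M X 0) = image_mset snd (rot_mset Q (M Xh k))" using Q by simp
  have A: "image_mset (\<lambda>j. X 0 - X j) (mset_set {..<n}) =
           image_mset (\<lambda>j. Q *v (Xh k - Xh j)) (mset_set {..<n})"
  proof -
    have d0: "mset_set {..<n} = add_mset 0 (mset_set ({..<n} - {0}))"
      using False by (metis finite_lessThan lessThan_iff mset_set.remove neq0_conv)
    have dk: "mset_set {..<n} = add_mset k (mset_set ({..<n} - {k}))"
      using k by (metis finite_lessThan lessThan_iff mset_set.remove)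
    have "image_mset (\<lambda>j. X 0 - X j) (mset_set ({..<n} - {0})) =
          image_mset (\<lambda>j. Q *v (Xh k - Xh j)) (mset_set ({..<n} - {k}))"
      using s by (simp add: M_def rot_mset_def multiset.map_comp o_def)
    then show ?thesis
      apply (subst d0, subst dk) by simp
  qed
  define Q' where "Q' = transpose Q"
  define t where "t = Xh k - Q' *v X 0"
  have QQ: "Q' ** Q = mat 1" using Q(1) by (simp add: Q'_def orthogonal_matrix_def)
  have "image_mset (\<lambda>u. Xh k - Q' *v u) (image_mset (\<lambda>j. X 0 - X j) (mset_set {..<n})) =
        image_mset (\<lambda>u. Xh k - Q' *v u) (image_mset (\<lambda>j. Q *v (Xh k - Xh j)) (mset_set {..<n}))"
    using A by simp
  then have "image_mset (\<lambda>j. Q' *v X j + t) (mset_set {..<n}) = image_mset Xh (mset_set {..<n})"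
    by (simp add: multiset.map_comp o_def t_def matrix_vector_mul_assoc QQ
        matrix_vector_mult_diff_distrib algebra_simps)
  then obtain p where "p permutes {..<n}" "\<forall>i<n. Xh (p i) = Q' *v X i + t"
    using perm_from_mset by blast
  moreover have "orthogonal_matrix Q'" using Q(1) by (simp add: Q'_def orthogonal_matrix_transpose)
  ultimately show ?thesis by blast
qed

end
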